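(* Let $N\ge 3$ be an integer, let $\Delta\theta^*=2\pi/N$, and let $P\neq 0$ be a real constant. Let $(\theta_k)_{k\ge1}$ and $(\omega_k)_{k\ge1}$ be real sequences with $\omega_k>0$ for all $k$, satisfying for every $k\ge 1$ $$\theta_{k+1}=\theta_k+\Delta\theta^*,\qquad \omega_{k+1}-\omega_k=P\sin\theta_k\left[\frac{1}{\omega_k}+\frac{1}{\omega_{k+1}}\right],$$ and the assumption $\omega_k^2>|P|$ for every $k\ge1$. If $\theta_1=0$, then the solution is periodic with period $N$: for every $k\ge 1$, $\theta_{k+N}=\theta_k+2\pi$ (so $\theta_{k+N}\equiv\theta_k \pmod{2\pi}$) and $\omega_{k+N}=\omega_k$; in particular $\omega_{N+1}=\omega_1$.
   Context: This is the "discrete zero dynamics" of a devil-stick with parameter $\phi=\pm\pi/2$; in the paper $P=\frac{g(\Delta\theta^* )^2}{2R\sin(\Delta\theta^* )}$ if $\phi=-\pi/2$ and $P=-\frac{g(\Delta\theta^* )^2}{2R\sin(\Delta\theta^* )}$ if $\phi=\pi/2$, where $g>0$ (gravity) and $R>0$ are constants. The hypothesis $\omega_k^2>|P|$ for all $k$ is the paper's Assumption 1. *)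

theory Defs
  imports Complex_Main
begin

end

theory Submission
  imports Defs
begin

lemma uniq:
  fixes x y z c a :: real
  assumes "x > 0" "y > 0" "z > 0" "y^2 > a" "z^2 > a" "\<bar>c\<bar> \<le> a"
    and e1: "y - x = c * (1 / x + 1 / y)" and e2: "z - x = c * (1 / x + 1 / z)"
  shows "y = z"
proof -
  have a0: "a \<ge> 0" using assms by linarith
  have yz: "y * z > a"
  proof (rule ccontr)
    assume "\<not> y * z > a"
    then have "y * z \<le> a" by simp
    then have "(y*z)^2 \<le> a^2" using assms by (intro power_mono) auto
    moreover have "a^2 < y^2 * z^2"
    proof -
      have "a * a \<le> y^2 * a" using a0 assms by (intro mult_right_mono) auto
      also have "\<dots> < y^2 * z^2" using assms by (intro mult_strict_left_mono) auto
      finally show ?thesis by (simp add: power2_eq_square)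
    qed
    ultimately show False by (simp add: power_mult_distrib)
  qed
  have "y - z = c * (1/y - 1/z)" using e1 e2 by (simp add: algebra_simps)
  then have "(y - z) * (y * z) = c * (z - y)" using assms by (simp add: field_simps)
  then have "(y - z) * (y * z + c) = 0" by (simp add: algebra_simps)
  moreover have "y * z + c > 0" using yz assms by linarith
  ultimately show ?thesis by simp
qed

theorem lemma1:
  fixes N :: nat and P :: real and \<theta> \<omega> :: "nat \<Rightarrow> real"
  assumes hN: "N \<ge> 3"
    and hP: "P \<noteq> 0"
    and hpos: "\<And>k. k \<ge> 1 \<Longrightarrow> \<omega> k > 0"
    and htheta: "\<And>k. k \<ge> 1 \<Longrightarrow> \<theta> (k + 1) = \<theta> k + 2 * pi / real N"
    and homega: "\<And>k. k \<ge> 1 \<Longrightarrow>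
        \<omega> (k + 1) - \<omega> k = P * sin (\<theta> k) * (1 / \<omega> k + 1 / \<omega> (k + 1))"
    and hA1: "\<And>k. k \<ge> 1 \<Longrightarrow> (\<omega> k)\<^sup>2 > \<bar>P\<bar>"
    and h0: "\<theta> 1 = 0"
  shows "\<forall>k\<ge>1. \<theta> (k + N) = \<theta> k + 2 * pi \<and> \<omega> (k + N) = \<omega> k"
proof -
  have Npos: "real N > 0" using hN by simp
  have th: "\<theta> k = 2 * pi * (real k - 1) / real N" if "k \<ge> 1" for k
    using that
  proof (induction k rule: dec_induct)
    case base then show ?case using h0 by simp
  next
    case (step m)
    then show ?case using htheta[of m] Npos by (simp add: field_simps)
  qed
  have thN: "\<theta> (k + N) = \<theta> k + 2 * pi" if "k \<ge> 1" for k
  proof -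
    have "\<theta> (k + N) = 2 * pi * (real k - 1) / real N + 2 * pi * real N / real N"
    proof -
      have "\<theta> (k + N) = 2 * pi * ((real k - 1) + real N) / real N"
        using th[of "k+N"] that by (simp add: algebra_simps)
      also have "\<dots> = (2 * pi * (real k - 1) + 2 * pi * real N) / real N"
        by (simp only: distrib_left)
      finally show ?thesis by (simp only: add_divide_distrib)
    qed
    moreover have "2 * pi * real N / real N = 2 * pi" using Npos by simp
    ultimately show ?thesis using th[of k] that by linarith
  qed
  have sinN: "sin (\<theta> (k + N)) = sin (\<theta> k)" if "k \<ge> 1" for k
    using thN[OF that] by simp
  have cb: "\<bar>P * sin t\<bar> \<le> \<bar>P\<bar>" for t
    by (simp add: abs_mult mult_left_le)
  have sinrefl: "sin (\<theta> (N + 2 - k)) = - sin (\<theta> k)" if "k \<ge> 1" "k \<le> N + 1" for k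
  proof -
    have "\<theta> (N + 2 - k) = 2 * pi * (real (N + 2 - k) - 1) / real N" using that by (intro th) auto
    also have "\<dots> = 2 * pi + (- (2 * pi * (real k - 1) / real N))"
      using that Npos by (simp add: of_nat_diff field_simps)
    finally show ?thesis using th[OF that(1)] by (simp add: sin_add)
  qed
  have pal: "\<forall>k. k \<ge> 2 \<longrightarrow> N + 3 = 2 * k + g \<longrightarrow> \<omega> k = \<omega> (N + 3 - k)" for g
  proof (induction g rule: nat_less_induct)
    case (1 g)
    show ?case
    proof (intro allI impI)
      fix k assume k2: "k \<ge> 2" and kg: "N + 3 = 2 * k + g"
      consider "g = 0" | "g = 1" | "g \<ge> 2" by linarith
      then show "\<omega> k = \<omega> (N + 3 - k)"
      proof cases
        case 1 then show ?thesis using kg by (simp add: numeral_eq_Suc)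
      next
        case 2
        have "real N = 2 * (real k - 1)" using kg 2 by simp
        moreover have "real N * \<theta> k = 2 * pi * (real k - 1)" using th[of k] k2 Npos by simp
        ultimately have "real N * \<theta> k = real N * pi" by simp
        then have "\<theta> k = pi" using Npos by simp
        then have "\<omega> (k + 1) = \<omega> k" using homega[of k] k2 by simp
        moreover have "N + 3 - k = k + 1" using kg 2 by simp
        ultimately show ?thesis by simp
      next
        case 3
        have IH: "\<omega> (k + 1) = \<omega> (N + 3 - (k + 1))"
          using 1[rule_format, of "g - 2" "k + 1"] 3 kg k2 by simp
        define K where "K = N + 3 - k"
        have KK: "K = (N + 2 - k) + 1" "N + 3 - (k + 1) = N + 2 - k" using kg 3 by (auto simp: K_def)
        have e2: "\<omega> K - \<omega> (k + 1) = (- (P * sin (\<theta> k))) * (1 / \<omega> (k+1) + 1 / \<omega> K)"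
          using homega[of "N + 2 - k"] sinrefl[of k] IH KK kg 3 k2 by simp
        have e1: "\<omega> k - \<omega> (k + 1) = (- (P * sin (\<theta> k))) * (1 / \<omega> (k+1) + 1 / \<omega> k)"
          using homega[of k] k2 by (simp add: algebra_simps)
        have "\<omega> k = \<omega> K"
          apply (rule uniq[OF _ _ _ _ _ _ e1 e2, of "\<bar>P\<bar>"])
          using hpos hA1 k2 kg cb[of "\<theta> k"] by (auto simp: K_def)
        then show ?thesis by (simp add: K_def)
      qed
    qed
  qed
  have w21: "\<omega> 2 = \<omega> 1" using homega[of 1] h0 by (simp add: numeral_eq_Suc)
  have wN1: "\<omega> (N + 1) = \<omega> 1"
    using pal[of "N - 1"] w21 hN by (simp add: numeral_eq_Suc)
  have wper: "\<omega> (k + N) = \<omega> k" if "k \<ge> 1" for k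
    using that
  proof (induction k rule: dec_induct)
    case base then show ?case using wN1 by simp
  next
    case (step m)
    have e1: "\<omega> (m + 1) - \<omega> m = P * sin (\<theta> m) * (1 / \<omega> m + 1 / \<omega> (m + 1))"
      using homega[of m] step by simp
    have e2: "\<omega> (m + N + 1) - \<omega> m = P * sin (\<theta> m) * (1 / \<omega> m + 1 / \<omega> (m + N + 1))"
      using homega[of "m + N"] step sinN[of m] by simp
    have "\<omega> (m + 1) = \<omega> (m + N + 1)"
      apply (rule uniq[OF _ _ _ _ _ _ e1 e2, of "\<bar>P\<bar>"])
      using hpos hA1 step cb[of "\<theta> m"] by auto
    then show ?case by simp
  qed
  show ?thesis using thN wper by simp
qed

end
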